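(* Let $\boldsymbol\xi=(\xi_1,\dots,\xi_n)$ be the indicator vector of the output of binary-tree pivotal sampling on a fixed full binary tree with leaves $[n]$ and leaf probabilities with integer sum. For every $\mathcal S\subseteq[n]$ with $\Pr[\xi_l=1\ \forall l\in\mathcal S]>0$ and all distinct $i,j\in[n]\setminus\mathcal S$, $$\Pr[\xi_i=1\mid \xi_l=1\ \forall l\in\mathcal S]\;\Pr[\xi_j=1\mid \xi_l=1\ \forall l\in\mathcal S]\;\ge\;\Pr[\xi_i=1,\ \xi_j=1\mid \xi_l=1\ \forall l\in\mathcal S].$$
   Context: Binary-tree pivotal sampling: let $T$ be a full binary tree whose leaves are identified with an index set, and let $q_i\in[0,1]$ be leaf probabilities with integer sum. Each node can store an index together with a current probability; initially each leaf $i$ stores $i$ with probability $q_i$, and the output set $\mathcal S_{\rm out}$ is empty. Repeatedly choose two sibling nodes that both store indices, say $i$ with probability $q_i$ and $j$ with probability $q_j$, with parent $P$, and remove them. If $q_i+q_j\le1$: with probability $q_i/(q_i+q_j)$ store $i$ at $P$ with probability $q_i+q_j$ ($j$ is rejected), otherwise store $j$ at $P$ with probability $q_i+q_j$ ($i$ is rejected). If $q_i+q_j>1$: with probability $(1-q_i)/(2-q_i-q_j)$ put $j$ into $\mathcal S_{\rm out}$ and store $i$ at $P$ with probability $q_i+q_j-1$; otherwise put $i$ into $\mathcal S_{\rm out}$ and store $j$ at $P$ with probability $q_i+q_j-1$. When only the root stores an index, put it into $\mathcal S_{\rm out}$ iff its probability is $1$. *)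

theory Defs
  imports "HOL-Probability.Probability"
begin

datatype btree = Leaf nat | Node btree btree

fun leaves :: "btree \<Rightarrow> nat list" where
  "leaves (Leaf i) = [i]"
| "leaves (Node l r) = leaves l @ leaves r"

text \<open>One pivotal merge of two sibling nodes storing index i with probability a and
  index j with probability b; S is the output set accumulated so far.\<close>
definition merge_step :: "nat set \<Rightarrow> nat \<Rightarrow> real \<Rightarrow> nat \<Rightarrow> real \<Rightarrow> (nat set \<times> (nat \<times> real)) pmf" where
  "merge_step S i a j b =
     (if a + b \<le> 1 then
        map_pmf (\<lambda>c. if c then (S, (i, a + b)) else (S, (j, a + b)))
                (bernoulli_pmf (a / (a + b)))
      else
        map_pmf (\<lambda>c. if c then (insert j S, (i, a + b - 1)) else (insert i S, (j, a + b - 1)))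
                (bernoulli_pmf ((1 - a) / (2 - a - b))))"

text \<open>Processing a subtree bottom-up: distribution of (outputs so far, what its root stores).
  Merges in disjoint subtrees are independent, so this fixed order yields the
  distribution of the procedure.\<close>
fun pivot :: "(nat \<Rightarrow> real) \<Rightarrow> btree \<Rightarrow> (nat set \<times> (nat \<times> real)) pmf" where
  "pivot q (Leaf i) = return_pmf ({}, (i, q i))"
| "pivot q (Node l r) =
     bind_pmf (pivot q l) (\<lambda>(S1, i, a).
       bind_pmf (pivot q r) (\<lambda>(S2, j, b). merge_step (S1 \<union> S2) i a j b))"

definition pivotal_sampling :: "(nat \<Rightarrow> real) \<Rightarrow> btree \<Rightarrow> nat set pmf" where
  "pivotal_sampling q t = map_pmf (\<lambda>(S, i, a). if a = 1 then insert i S else S) (pivot q t)"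

end

theory Submission
  imports Defs
begin


definition cl :: "real \<Rightarrow> real" where "cl p = max 0 (min 1 p)"

lemma cl_range: "0 \<le> cl p" "cl p \<le> 1" by (auto simp: cl_def)

lemma bern_cl: "bernoulli_pmf p = bernoulli_pmf (cl p)"
  by (rule pmf_eqI) (simp add: bernoulli_pmf.rep_eq cl_def split: split_max split_min)

lemma prob_bind_bern:
  fixes F :: "bool \<Rightarrow> 'a pmf"
  shows "measure_pmf.prob (bind_pmf (bernoulli_pmf p) F) E
     = cl p * measure_pmf.prob (F True) E + (1 - cl p) * measure_pmf.prob (F False) E"
proof -
  have p: "0 \<le> cl p" "cl p \<le> 1" by (rule cl_range)+
  have "ennreal (measure_pmf.prob (bind_pmf (bernoulli_pmf p) F) E) = emeasure (measure_pmf (bind_pmf (bernoulli_pmf (cl p)) F)) E"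
    by (simp add: bern_cl[symmetric] measure_pmf.emeasure_eq_measure)
  also have "\<dots> = emeasure (F True) E * cl p + emeasure (F False) E * (1 - cl p)"
    using p by simp
  also have "\<dots> = ennreal (cl p * measure_pmf.prob (F True) E + (1 - cl p) * measure_pmf.prob (F False) E)"
    using p by (simp add: measure_pmf.emeasure_eq_measure ennreal_mult' ennreal_plus[symmetric] mult.commute)
  finally show ?thesis using p
    by (subst (asm) ennreal_inj) auto
qed


fun val :: "(nat \<Rightarrow> real) \<Rightarrow> btree \<Rightarrow> real" where
  "val q (Leaf i) = q i"
| "val q (Node l r) = (if val q l + val q r \<le> 1 then val q l + val q r else val q l + val q r - 1)"

lemma set_merge_step:
  "x \<in> set_pmf (merge_step S i a j b) \<Longrightarrow>
    (if a + b \<le> 1 then x \<in> {(S, (i, a + b)), (S, (j, a + b))}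
     else x \<in> {(insert j S, (i, a + b - 1)), (insert i S, (j, a + b - 1))})"
  unfolding merge_step_def by (auto split: if_splits)

lemma supp_pivot:
  "x \<in> set_pmf (pivot q t) \<Longrightarrow>
     fst x \<subseteq> set (leaves t) \<and> fst (snd x) \<in> set (leaves t) \<and> snd (snd x) = val q t"
proof (induction t arbitrary: x)
  case (Leaf i) then show ?case by simp
next
  case (Node l r)
  from Node.prems obtain x1 x2 where x1: "x1 \<in> set_pmf (pivot q l)" and x2: "x2 \<in> set_pmf (pivot q r)"
    and x: "x \<in> set_pmf (merge_step (fst x1 \<union> fst x2) (fst (snd x1)) (snd (snd x1)) (fst (snd x2)) (snd (snd x2)))"
    by (auto simp: case_prod_beta)
  from Node.IH(1)[OF x1] Node.IH(2)[OF x2] set_merge_step[OF x] show ?case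
    by (auto split: if_splits)
qed


lemma pivot_node_pair:
  "pivot q (Node l r) = bind_pmf (pair_pmf (pivot q l) (pivot q r))
     (\<lambda>z. merge_step (fst (fst z) \<union> fst (snd z)) (fst (snd (fst z))) (val q l) (fst (snd (snd z))) (val q r))"
proof -
  have "pivot q (Node l r) = bind_pmf (pair_pmf (pivot q l) (pivot q r))
     (\<lambda>z. merge_step (fst (fst z) \<union> fst (snd z)) (fst (snd (fst z))) (snd (snd (fst z))) (fst (snd (snd z))) (snd (snd (snd z))))"
    by (simp add: pair_pmf_def bind_assoc_pmf bind_return_pmf case_prod_unfold)
  also have "\<dots> = bind_pmf (pair_pmf (pivot q l) (pivot q r))
     (\<lambda>z. merge_step (fst (fst z) \<union> fst (snd z)) (fst (snd (fst z))) (val q l) (fst (snd (snd z))) (val q r))"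
    by (rule bind_pmf_cong) (auto dest!: supp_pivot)
  finally show ?thesis .
qed

lemma prob_bind_map_bern:
  "measure_pmf.prob (bind_pmf M (\<lambda>z. map_pmf (h z) (bernoulli_pmf p))) E
   = cl p * measure_pmf.prob M {z. h z True \<in> E} + (1 - cl p) * measure_pmf.prob M {z. h z False \<in> E}"
proof -
  have "bind_pmf M (\<lambda>z. map_pmf (h z) (bernoulli_pmf p))
      = bind_pmf (bernoulli_pmf p) (\<lambda>c. map_pmf (\<lambda>z. h z c) M)"
    unfolding map_pmf_def by (rule bind_commute_pmf)
  then show ?thesis by (simp add: prob_bind_bern vimage_def)
qed

lemma node_prob_le:
  assumes "val q l + val q r \<le> 1"
  shows "measure_pmf.prob (pivot q (Node l r)) E =
    cl (val q l / (val q l + val q r)) * measure_pmf.prob (pair_pmf (pivot q l) (pivot q r))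
        {z. (fst (fst z) \<union> fst (snd z), (fst (snd (fst z)), val q l + val q r)) \<in> E}
  + (1 - cl (val q l / (val q l + val q r))) * measure_pmf.prob (pair_pmf (pivot q l) (pivot q r))
        {z. (fst (fst z) \<union> fst (snd z), (fst (snd (snd z)), val q l + val q r)) \<in> E}"
  unfolding pivot_node_pair merge_step_def using assms
  by (simp add: prob_bind_map_bern[where h="\<lambda>z c. if c then (fst (fst z) \<union> fst (snd z), (fst (snd (fst z)), val q l + val q r)) else (fst (fst z) \<union> fst (snd z), (fst (snd (snd z)), val q l + val q r))", simplified])

lemma node_prob_gt:
  assumes "\<not> val q l + val q r \<le> 1"
  shows "measure_pmf.prob (pivot q (Node l r)) E =
    cl ((1 - val q l) / (2 - val q l - val q r)) * measure_pmf.prob (pair_pmf (pivot q l) (pivot q r))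
        {z. (insert (fst (snd (snd z))) (fst (fst z) \<union> fst (snd z)), (fst (snd (fst z)), val q l + val q r - 1)) \<in> E}
  + (1 - cl ((1 - val q l) / (2 - val q l - val q r))) * measure_pmf.prob (pair_pmf (pivot q l) (pivot q r))
        {z. (insert (fst (snd (fst z))) (fst (fst z) \<union> fst (snd z)), (fst (snd (snd z)), val q l + val q r - 1)) \<in> E}"
  unfolding pivot_node_pair merge_step_def using assms
  by (simp add: prob_bind_map_bern[where h="\<lambda>z c. if c then (insert (fst (snd (snd z))) (fst (fst z) \<union> fst (snd z)), (fst (snd (fst z)), val q l + val q r - 1)) else (insert (fst (snd (fst z))) (fst (fst z) \<union> fst (snd z)), (fst (snd (snd z)), val q l + val q r - 1))", simplified])


lemma pair_split:
  assumes PM: "\<forall>x\<in>set_pmf M. P x \<subseteq> L1" and QN: "\<forall>y\<in>set_pmf N. Q y \<subseteq> L2"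
    and disj: "L1 \<inter> L2 = {}" and B: "B \<subseteq> L1 \<union> L2"
  shows "measure_pmf.prob (pair_pmf M N) {z. B \<subseteq> P (fst z) \<union> Q (snd z)}
     = measure_pmf.prob M {x. B \<inter> L1 \<subseteq> P x} * measure_pmf.prob N {y. B \<inter> L2 \<subseteq> Q y}"
proof -
  have eq: "{z. B \<subseteq> P (fst z) \<union> Q (snd z)} \<inter> set_pmf (pair_pmf M N)
     = ({x. B \<inter> L1 \<subseteq> P x} \<inter> set_pmf M) \<times> ({y. B \<inter> L2 \<subseteq> Q y} \<inter> set_pmf N)"
    using PM QN disj B by auto blast+
  have "measure_pmf.prob (pair_pmf M N) {z. B \<subseteq> P (fst z) \<union> Q (snd z)}
     = measure_pmf.prob (pair_pmf M N) ({z. B \<subseteq> P (fst z) \<union> Q (snd z)} \<inter> set_pmf (pair_pmf M N))"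
    by (rule measure_Int_set_pmf[symmetric])
  also have "\<dots> = measure_pmf.prob M ({x. B \<inter> L1 \<subseteq> P x} \<inter> set_pmf M) * measure_pmf.prob N ({y. B \<inter> L2 \<subseteq> Q y} \<inter> set_pmf N)"
    unfolding eq
    by (rule measure_pmf_prob_product) (auto intro: countable_subset[OF _ countable_set_pmf])
  finally show ?thesis by (simp add: measure_Int_set_pmf)
qed


lemma cross_alg:
  fixes e00 e01 e10 e11 x0 x1 y0 y1 u0 u1 w0 w1 :: real
  assumes "e00 * e11 \<le> e01 * e10" "x1 * y0 \<le> x0 * y1" "u1 * w0 \<le> u0 * w1"
  shows "(e00*x1*u1 + e01*x1*w1 + e10*y1*u1 + e11*y1*w1) * (e00*x0*u0 + e01*x0*w0 + e10*y0*u0 + e11*y0*w0)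
       \<le> (e00*x1*u0 + e01*x1*w0 + e10*y1*u0 + e11*y1*w0) * (e00*x0*u1 + e01*x0*w1 + e10*y0*u1 + e11*y0*w1)"
proof -
  have id: "(e00*x1*u0 + e01*x1*w0 + e10*y1*u0 + e11*y1*w0) * (e00*x0*u1 + e01*x0*w1 + e10*y0*u1 + e11*y0*w1)
     - (e00*x1*u1 + e01*x1*w1 + e10*y1*u1 + e11*y1*w1) * (e00*x0*u0 + e01*x0*w0 + e10*y0*u0 + e11*y0*w0)
     = (e01*e10 - e00*e11) * ((x0*y1 - x1*y0) * (u0*w1 - u1*w0))" by algebra
  have "0 \<le> (e01*e10 - e00*e11) * ((x0*y1 - x1*y0) * (u0*w1 - u1*w0))"
    using assms by (intro mult_nonneg_nonneg) auto
  then show ?thesis using id by linarith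
qed

lemma rr_alg:
  fixes m0 m1 n0 n1 x0 x1 y0 y1 :: real
  assumes "m1 * n0 \<le> m0 * n1" "x1 * y0 \<le> x0 * y1"
  shows "(m0*x1 + m1*y1) * (n0*x0 + n1*y0) \<le> (m0*x0 + m1*y0) * (n0*x1 + n1*y1)"
proof -
  have id: "(m0*x0 + m1*y0) * (n0*x1 + n1*y1) - (m0*x1 + m1*y1) * (n0*x0 + n1*y0)
     = (x0*y1 - x1*y0) * (m0*n1 - m1*n0)" by algebra
  have "0 \<le> (x0*y1 - x1*y0) * (m0*n1 - m1*n0)"
    using assms by (intro mult_nonneg_nonneg) auto
  then show ?thesis using id by linarith
qed


definition NC :: "(nat set \<Rightarrow> real) \<Rightarrow> (nat set \<Rightarrow> real) \<Rightarrow> bool" where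
  "NC f g \<longleftrightarrow> (\<forall>B i j la sg. i \<noteq> j \<longrightarrow> 0 \<le> la \<longrightarrow> 0 \<le> sg \<longrightarrow>
     (la * f (insert i (insert j B)) + sg * g (insert i (insert j B))) * (la * f B + sg * g B)
     \<le> (la * f (insert i B) + sg * g (insert i B)) * (la * f (insert j B) + sg * g (insert j B)))"

definition RR :: "(nat set \<Rightarrow> real) \<Rightarrow> (nat set \<Rightarrow> real) \<Rightarrow> bool" where
  "RR f g \<longleftrightarrow> (\<forall>B i. f (insert i B) * g B \<le> f B * g (insert i B))"

lemma combine:
  fixes F G fL gL fR gR :: "nat set \<Rightarrow> real" and LA LB :: "nat set"
    and ca cb cc cd da db dc dd :: real
  assumes nc1: "NC fL gL" and rr1: "RR fL gL" and nn1: "\<And>X. 0 \<le> fL X \<and> 0 \<le> gL X"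
    and nc2: "NC fR gR" and rr2: "RR fR gR" and nn2: "\<And>X. 0 \<le> fR X \<and> 0 \<le> gR X"
    and cnn: "0 \<le> ca" "0 \<le> cb" "0 \<le> cc" "0 \<le> cd" "0 \<le> da" "0 \<le> db" "0 \<le> dc" "0 \<le> dd"
    and H1: "\<And>la sg. 0 \<le> la \<Longrightarrow> 0 \<le> sg \<Longrightarrow>
       (la*ca+sg*da)*(la*cd+sg*dd) \<le> (la*cb+sg*db)*(la*cc+sg*dc)"
    and H2: "\<And>u v. 0 \<le> u \<Longrightarrow> 0 \<le> v \<Longrightarrow> (cc*u+cd* v)*(da*u+db* v) \<le> (ca*u+cb* v)*(dc*u+dd* v)"
    and H3: "\<And>x y. 0 \<le> x \<Longrightarrow> 0 \<le> y \<Longrightarrow> (cb*x+cd*y)*(da*x+dc*y) \<le> (ca*x+cc*y)*(db*x+dd*y)"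
    and disj: "LA \<inter> LB = {}"
    and FG: "\<And>X. X \<subseteq> LA \<union> LB \<Longrightarrow>
        F X = ca*fL (X\<inter>LA)*fR (X\<inter>LB) + cb*fL (X\<inter>LA)*gR (X\<inter>LB) + cc*gL (X\<inter>LA)*fR (X\<inter>LB) + cd*gL (X\<inter>LA)*gR (X\<inter>LB)
      \<and> G X = da*fL (X\<inter>LA)*fR (X\<inter>LB) + db*fL (X\<inter>LA)*gR (X\<inter>LB) + dc*gL (X\<inter>LA)*fR (X\<inter>LB) + dd*gL (X\<inter>LA)*gR (X\<inter>LB)"
    and Z: "\<And>X. \<not> X \<subseteq> LA \<union> LB \<Longrightarrow> F X = 0 \<and> G X = 0"
  shows "NC F G \<and> RR F G \<and> (\<forall>X. 0 \<le> F X \<and> 0 \<le> G X)"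
proof -
  let ?L = "LA \<union> LB"
  have nnFG: "0 \<le> F X \<and> 0 \<le> G X" for X
  proof (cases "X \<subseteq> ?L")
    case True
    have a: "0 \<le> fL (X\<inter>LA)" "0 \<le> gL (X\<inter>LA)" "0 \<le> fR (X\<inter>LB)" "0 \<le> gR (X\<inter>LB)"
      using nn1 nn2 by auto
    show ?thesis unfolding FG[OF True, THEN conjunct1] FG[OF True, THEN conjunct2] using a cnn
      by (intro conjI add_nonneg_nonneg mult_nonneg_nonneg; simp)
  next
    case False then show ?thesis using Z by simp
  qed
  have ins1: "insert i X \<inter> LA = insert i (X \<inter> LA)" "insert i X \<inter> LB = X \<inter> LB" if "i \<in> LA" for i X
    using that disj by auto
  have ins2: "insert i X \<inter> LB = insert i (X \<inter> LB)" "insert i X \<inter> LA = X \<inter> LA" if "i \<in> LB" for i X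
    using that disj by auto
  have NCFG: "NC F G"
    unfolding NC_def
  proof (intro allI impI)
    fix B :: "nat set" and i j :: nat and la sg :: real
    assume ij: "i \<noteq> j" and la: "0 \<le> la" and sg: "0 \<le> sg"
    define \<phi> where "\<phi> X = la * F X + sg * G X" for X
    have \<phi>nn: "0 \<le> \<phi> X" for X unfolding \<phi>_def using nnFG[of X] la sg by simp
    define e00 where "e00 = la*ca+sg*da"
    define e01 where "e01 = la*cb+sg*db"
    define e10 where "e10 = la*cc+sg*dc"
    define e11 where "e11 = la*cd+sg*dd"
    have \<phi>exp: "\<phi> X = e00*fL (X\<inter>LA)*fR (X\<inter>LB) + e01*fL (X\<inter>LA)*gR (X\<inter>LB) + e10*gL (X\<inter>LA)*fR (X\<inter>LB) + e11*gL (X\<inter>LA)*gR (X\<inter>LB)"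
      if "X \<subseteq> ?L" for X
      unfolding \<phi>_def e00_def e01_def e10_def e11_def using FG[OF that] by (simp add: algebra_simps)
    have cross: "\<phi> (insert a (insert b B)) * \<phi> B \<le> \<phi> (insert a B) * \<phi> (insert b B)"
      if ab: "a \<in> LA" "b \<in> LB" "B \<subseteq> ?L" for a b
    proof -
      have s: "insert a (insert b B) \<subseteq> ?L" "insert a B \<subseteq> ?L" "insert b B \<subseteq> ?L" using ab by auto
      have r1: "fL (insert a (B\<inter>LA)) * gL (B\<inter>LA) \<le> fL (B\<inter>LA) * gL (insert a (B\<inter>LA))"
        using rr1 unfolding RR_def by blast
      have r2: "fR (insert b (B\<inter>LB)) * gR (B\<inter>LB) \<le> fR (B\<inter>LB) * gR (insert b (B\<inter>LB))"
        using rr2 unfolding RR_def by blast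
      have e: "e00 * e11 \<le> e01 * e10" unfolding e00_def e01_def e10_def e11_def using H1[OF la sg] .
      have "insert a (insert b B) \<inter> LA = insert a (B \<inter> LA)" "insert a (insert b B) \<inter> LB = insert b (B \<inter> LB)"
        using ab disj by auto
      then show ?thesis
        unfolding \<phi>exp[OF s(1)] \<phi>exp[OF s(2)] \<phi>exp[OF s(3)] \<phi>exp[OF ab(3)] ins1[OF ab(1)] ins2[OF ab(2)]
        using cross_alg[OF e r1 r2] by simp
    qed
    show "(la * F (insert i (insert j B)) + sg * G (insert i (insert j B))) * (la * F B + sg * G B)
       \<le> (la * F (insert i B) + sg * G (insert i B)) * (la * F (insert j B) + sg * G (insert j B))"
      unfolding \<phi>_def[symmetric]
    proof (cases "insert i (insert j B) \<subseteq> ?L")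
      case False
      then have "\<phi> (insert i (insert j B)) = 0" unfolding \<phi>_def using Z by simp
      then show "\<phi> (insert i (insert j B)) * \<phi> B \<le> \<phi> (insert i B) * \<phi> (insert j B)"
        using \<phi>nn by simp
    next
      case True
      then have iL: "i \<in> ?L" and jL: "j \<in> ?L" and BL: "B \<subseteq> ?L" by auto
      show "\<phi> (insert i (insert j B)) * \<phi> B \<le> \<phi> (insert i B) * \<phi> (insert j B)"
      proof (cases "i \<in> LA")
        case i1: True
        show ?thesis
        proof (cases "j \<in> LA")
          case j1: True
          define lam where "lam = la*(ca*fR (B\<inter>LB) + cb*gR (B\<inter>LB)) + sg*(da*fR (B\<inter>LB) + db*gR (B\<inter>LB))"
          define sgm where "sgm = la*(cc*fR (B\<inter>LB) + cd*gR (B\<inter>LB)) + sg*(dc*fR (B\<inter>LB) + dd*gR (B\<inter>LB))"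
          have lam: "0 \<le> lam" "0 \<le> sgm" unfolding lam_def sgm_def using nn2 cnn la sg
            by (intro add_nonneg_nonneg mult_nonneg_nonneg; simp)+
          have red: "\<phi> X = lam * fL (X\<inter>LA) + sgm * gL (X\<inter>LA)" if "X \<subseteq> ?L" "X \<inter> LB = B \<inter> LB" for X
            using FG[OF that(1)] that(2) unfolding \<phi>_def lam_def sgm_def by (simp add: algebra_simps)
          have s: "insert i (insert j B) \<subseteq> ?L" "insert i B \<subseteq> ?L" "insert j B \<subseteq> ?L" using True by auto
          have t: "insert i (insert j B) \<inter> LB = B \<inter> LB" "insert i B \<inter> LB = B \<inter> LB" "insert j B \<inter> LB = B \<inter> LB"
            "insert i (insert j B) \<inter> LA = insert i (insert j (B \<inter> LA))"
            using i1 j1 disj by auto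
          show ?thesis
            unfolding red[OF s(1) t(1)] red[OF s(2) t(2)] red[OF s(3) t(3)] red[OF BL refl] t(4)
              ins1[OF i1] ins1[OF j1]
            using nc1 ij lam unfolding NC_def by blast
        next
          case j2: False
          then have "j \<in> LB" using jL by auto
          from cross[OF i1 this BL] show ?thesis .
        qed
      next
        case i2': False
        then have i2: "i \<in> LB" using iL by auto
        show ?thesis
        proof (cases "j \<in> LA")
          case j1: True
          from cross[OF j1 i2 BL] show ?thesis by (simp add: insert_commute mult.commute)
        next
          case False
          then have j2: "j \<in> LB" using jL by auto
          define lam where "lam = la*(ca*fL (B\<inter>LA) + cc*gL (B\<inter>LA)) + sg*(da*fL (B\<inter>LA) + dc*gL (B\<inter>LA))"
          define sgm where "sgm = la*(cb*fL (B\<inter>LA) + cd*gL (B\<inter>LA)) + sg*(db*fL (B\<inter>LA) + dd*gL (B\<inter>LA))"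
          have lam: "0 \<le> lam" "0 \<le> sgm" unfolding lam_def sgm_def using nn1 cnn la sg
            by (intro add_nonneg_nonneg mult_nonneg_nonneg; simp)+
          have red: "\<phi> X = lam * fR (X\<inter>LB) + sgm * gR (X\<inter>LB)" if "X \<subseteq> ?L" "X \<inter> LA = B \<inter> LA" for X
            using FG[OF that(1)] that(2) unfolding \<phi>_def lam_def sgm_def by (simp add: algebra_simps)
          have s: "insert i (insert j B) \<subseteq> ?L" "insert i B \<subseteq> ?L" "insert j B \<subseteq> ?L" using True by auto
          have t: "insert i (insert j B) \<inter> LA = B \<inter> LA" "insert i B \<inter> LA = B \<inter> LA" "insert j B \<inter> LA = B \<inter> LA"
            "insert i (insert j B) \<inter> LB = insert i (insert j (B \<inter> LB))"
            using i2 j2 disj by auto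
          show ?thesis
            unfolding red[OF s(1) t(1)] red[OF s(2) t(2)] red[OF s(3) t(3)] red[OF BL refl] t(4)
              ins2[OF i2] ins2[OF j2]
            using nc2 ij lam unfolding NC_def by blast
        qed
      qed
    qed
  qed
  have RRFG: "RR F G"
    unfolding RR_def
  proof (intro allI)
    fix B :: "nat set" and i :: nat
    show "F (insert i B) * G B \<le> F B * G (insert i B)"
    proof (cases "insert i B \<subseteq> ?L")
      case False
      then show ?thesis using Z[OF False] by simp
    next
      case True
      then have BL: "B \<subseteq> ?L" and iL: "i \<in> ?L" by auto
      show ?thesis
      proof (cases "i \<in> LA")
        case i1: True
        define u where "u = fR (B\<inter>LB)"
        define v where "v = gR (B\<inter>LB)"
        have uv: "0 \<le> u" "0 \<le> v" unfolding u_def v_def using nn2 by auto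
        have r1: "fL (insert i (B\<inter>LA)) * gL (B\<inter>LA) \<le> fL (B\<inter>LA) * gL (insert i (B\<inter>LA))"
          using rr1 unfolding RR_def by blast
        show ?thesis
          unfolding FG[OF True, THEN conjunct1] FG[OF True, THEN conjunct2] FG[OF BL, THEN conjunct1]
            FG[OF BL, THEN conjunct2] ins1[OF i1] u_def[symmetric] v_def[symmetric]
          using rr_alg[OF H2[OF uv] r1] by (simp add: algebra_simps)
      next
        case False
        then have i2: "i \<in> LB" using iL by auto
        define x where "x = fL (B\<inter>LA)"
        define y where "y = gL (B\<inter>LA)"
        have xy: "0 \<le> x" "0 \<le> y" unfolding x_def y_def using nn1 by auto
        have r2: "fR (insert i (B\<inter>LB)) * gR (B\<inter>LB) \<le> fR (B\<inter>LB) * gR (insert i (B\<inter>LB))"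
          using rr2 unfolding RR_def by blast
        show ?thesis
          unfolding FG[OF True, THEN conjunct1] FG[OF True, THEN conjunct2] FG[OF BL, THEN conjunct1]
            FG[OF BL, THEN conjunct2] ins2[OF i2] x_def[symmetric] y_def[symmetric]
          using rr_alg[OF H3[OF xy] r2] by (simp add: algebra_simps)
      qed
    qed
  qed
  show ?thesis using NCFG RRFG nnFG by blast
qed


definition al :: "(nat set \<times> nat \<times> real) pmf \<Rightarrow> nat set \<Rightarrow> real" where
  "al D B = measure_pmf.prob D {x. B \<subseteq> fst x}"
definition ga :: "(nat set \<times> nat \<times> real) pmf \<Rightarrow> nat set \<Rightarrow> real" where
  "ga D B = measure_pmf.prob D {x. B \<subseteq> insert (fst (snd x)) (fst x)}"

lemma al_ga_zero:
  assumes "\<not> B \<subseteq> set (leaves t)"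
  shows "al (pivot q t) B = 0 \<and> ga (pivot q t) B = 0"
  unfolding al_def ga_def measure_pmf_zero_iff using assms
  by (auto dest!: supp_pivot)

lemma main_inv:
  "distinct (leaves t) \<Longrightarrow> NC (al (pivot q t)) (ga (pivot q t)) \<and> RR (al (pivot q t)) (ga (pivot q t))
     \<and> (\<forall>X. 0 \<le> al (pivot q t) X \<and> 0 \<le> ga (pivot q t) X)"
proof (induction t)
  case (Leaf m)
  have al: "al (pivot q (Leaf m)) B = (if B = {} then 1 else 0)" for B
    by (simp add: al_def indicator_def)
  have ga: "ga (pivot q (Leaf m)) B = (if B \<subseteq> {m} then 1 else 0)" for B
    by (simp add: ga_def indicator_def)
  have nc: "NC (al (pivot q (Leaf m))) (ga (pivot q (Leaf m)))"
    unfolding NC_def al ga by (auto intro!: mult_nonneg_nonneg add_nonneg_nonneg)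
  have rr: "RR (al (pivot q (Leaf m))) (ga (pivot q (Leaf m)))"
    unfolding RR_def al ga by auto
  have nn: "\<forall>X. 0 \<le> al (pivot q (Leaf m)) X \<and> 0 \<le> ga (pivot q (Leaf m)) X"
    unfolding al ga by simp
  show ?case using nc rr nn by blast
next
  case (Node l r)
  let ?D = "pivot q (Node l r)" and ?D1 = "pivot q l" and ?D2 = "pivot q r"
  let ?L1 = "set (leaves l)" and ?L2 = "set (leaves r)"
  let ?a = "val q l" and ?b = "val q r"
  have dl: "distinct (leaves l)" and dr: "distinct (leaves r)" and disj: "?L1 \<inter> ?L2 = {}"
    using Node.prems by auto
  note IH1 = Node.IH(1)[OF dl] and IH2 = Node.IH(2)[OF dr]
  have s1: "\<forall>x\<in>set_pmf ?D1. fst x \<subseteq> ?L1" "\<forall>x\<in>set_pmf ?D1. insert (fst (snd x)) (fst x) \<subseteq> ?L1"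
    by (auto dest!: supp_pivot)
  have s2: "\<forall>x\<in>set_pmf ?D2. fst x \<subseteq> ?L2" "\<forall>x\<in>set_pmf ?D2. insert (fst (snd x)) (fst x) \<subseteq> ?L2"
    by (auto dest!: supp_pivot)
  have Z: "\<not> X \<subseteq> ?L1 \<union> ?L2 \<Longrightarrow> al ?D X = 0 \<and> ga ?D X = 0" for X
    using al_ga_zero[of X "Node l r" q] by simp
  have AA: "measure_pmf.prob (pair_pmf ?D1 ?D2) {z. X \<subseteq> fst (fst z) \<union> fst (snd z)} = al ?D1 (X \<inter> ?L1) * al ?D2 (X \<inter> ?L2)"
    if "X \<subseteq> ?L1 \<union> ?L2" for X
    unfolding al_def by (rule pair_split[OF s1(1) s2(1) disj that])
  have GA: "measure_pmf.prob (pair_pmf ?D1 ?D2) {z. X \<subseteq> insert (fst (snd (fst z))) (fst (fst z) \<union> fst (snd z))} = ga ?D1 (X \<inter> ?L1) * al ?D2 (X \<inter> ?L2)"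
    if "X \<subseteq> ?L1 \<union> ?L2" for X
  proof -
    have "{z. X \<subseteq> insert (fst (snd (fst z))) (fst (fst z) \<union> fst (snd z))}
      = {z. X \<subseteq> (\<lambda>x. insert (fst (snd x)) (fst x)) (fst z) \<union> fst (snd z)}" by auto
    then show ?thesis unfolding al_def ga_def using pair_split[OF s1(2) s2(1) disj that] by simp
  qed
  have AG: "measure_pmf.prob (pair_pmf ?D1 ?D2) {z. X \<subseteq> insert (fst (snd (snd z))) (fst (fst z) \<union> fst (snd z))} = al ?D1 (X \<inter> ?L1) * ga ?D2 (X \<inter> ?L2)"
    if "X \<subseteq> ?L1 \<union> ?L2" for X
  proof -
    have "{z. X \<subseteq> insert (fst (snd (snd z))) (fst (fst z) \<union> fst (snd z))}
      = {z. X \<subseteq> fst (fst z) \<union> (\<lambda>x. insert (fst (snd x)) (fst x)) (snd z)}" by auto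
    then show ?thesis unfolding al_def ga_def using pair_split[OF s1(1) s2(2) disj that] by simp
  qed
  have GG: "measure_pmf.prob (pair_pmf ?D1 ?D2) {z. X \<subseteq> insert (fst (snd (fst z))) (insert (fst (snd (snd z))) (fst (fst z) \<union> fst (snd z)))} = ga ?D1 (X \<inter> ?L1) * ga ?D2 (X \<inter> ?L2)"
    if "X \<subseteq> ?L1 \<union> ?L2" for X
  proof -
    have eq: "{z. X \<subseteq> insert (fst (snd (fst z))) (insert (fst (snd (snd z))) (fst (fst z) \<union> fst (snd z)))}
      = {z. X \<subseteq> (\<lambda>x. insert (fst (snd x)) (fst x)) (fst z) \<union> (\<lambda>x. insert (fst (snd x)) (fst x)) (snd z)}" (is "_ = ?R") by auto
    have h: "measure_pmf.prob (pair_pmf ?D1 ?D2) ?R = ga ?D1 (X \<inter> ?L1) * ga ?D2 (X \<inter> ?L2)"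
      unfolding ga_def by (rule pair_split[OF s1(2) s2(2) disj that])
    show ?thesis unfolding eq by (rule h)
  qed
  have GG': "measure_pmf.prob (pair_pmf ?D1 ?D2) {z. X \<subseteq> insert (fst (snd (snd z))) (insert (fst (snd (fst z))) (fst (fst z) \<union> fst (snd z)))} = ga ?D1 (X \<inter> ?L1) * ga ?D2 (X \<inter> ?L2)"
    if "X \<subseteq> ?L1 \<union> ?L2" for X
    using GG[OF that] by (simp add: insert_commute)
  show ?case
  proof (cases "?a + ?b \<le> 1")
    case True
    define p where "p = cl (?a / (?a + ?b))"
    have p: "0 \<le> p" "p \<le> 1" unfolding p_def by (rule cl_range)+
    show ?thesis
    proof (rule combine[where ca=1 and cb=0 and cc=0 and cd=0 and da=0 and db="1-p" and dc=p and dd=0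
          and LA="?L1" and LB="?L2" and fL="al ?D1" and gL="ga ?D1" and fR="al ?D2" and gR="ga ?D2"])
      show "NC (al ?D1) (ga ?D1)" "RR (al ?D1) (ga ?D1)" "NC (al ?D2) (ga ?D2)" "RR (al ?D2) (ga ?D2)"
        using IH1 IH2 by auto
      show "0 \<le> al ?D1 X \<and> 0 \<le> ga ?D1 X" "0 \<le> al ?D2 X \<and> 0 \<le> ga ?D2 X" for X
        using IH1 IH2 by auto
      show "?L1 \<inter> ?L2 = {}" by (rule disj)
      show "\<not> X \<subseteq> ?L1 \<union> ?L2 \<Longrightarrow> al ?D X = 0 \<and> ga ?D X = 0" for X by (rule Z)
      show "(0::real) \<le> 1" "(0::real) \<le> 0" "0 \<le> 1 - p" "0 \<le> p" using p by auto
      show "(la * 1 + sg * 0) * (la * 0 + sg * 0) \<le> (la * 0 + sg * (1 - p)) * (la * 0 + sg * p)"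
        if "0 \<le> la" "0 \<le> sg" for la sg :: real
        using p that by (simp add: mult_nonneg_nonneg)
      show "(0 * u + 0 * v) * (0 * u + (1 - p) * v) \<le> (1 * u + 0 * v) * (p * u + 0 * v)"
        if "0 \<le> u" "0 \<le> v" for u v :: real
        using p that by (simp add: mult_nonneg_nonneg)
      show "(0 * x + 0 * y) * (0 * x + p * y) \<le> (1 * x + 0 * y) * ((1 - p) * x + 0 * y)"
        if "0 \<le> x" "0 \<le> y" for x y :: real
        using p that by (simp add: mult_nonneg_nonneg)
      fix X assume X: "X \<subseteq> ?L1 \<union> ?L2"
      have "al ?D X = p * (al ?D1 (X \<inter> ?L1) * al ?D2 (X \<inter> ?L2)) + (1 - p) * (al ?D1 (X \<inter> ?L1) * al ?D2 (X \<inter> ?L2))"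
        unfolding al_def[of ?D] node_prob_le[OF True] p_def[symmetric] using AA[OF X] by (simp add: al_def)
      moreover have "ga ?D X = p * (ga ?D1 (X \<inter> ?L1) * al ?D2 (X \<inter> ?L2)) + (1 - p) * (al ?D1 (X \<inter> ?L1) * ga ?D2 (X \<inter> ?L2))"
        unfolding ga_def[of ?D] node_prob_le[OF True] p_def[symmetric] using GA[OF X] AG[OF X] by simp
      ultimately show "al ?D X = 1 * al ?D1 (X \<inter> ?L1) * al ?D2 (X \<inter> ?L2) + 0 * al ?D1 (X \<inter> ?L1) * ga ?D2 (X \<inter> ?L2) +
          0 * ga ?D1 (X \<inter> ?L1) * al ?D2 (X \<inter> ?L2) + 0 * ga ?D1 (X \<inter> ?L1) * ga ?D2 (X \<inter> ?L2) \<and>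
        ga ?D X = 0 * al ?D1 (X \<inter> ?L1) * al ?D2 (X \<inter> ?L2) + (1 - p) * al ?D1 (X \<inter> ?L1) * ga ?D2 (X \<inter> ?L2) +
          p * ga ?D1 (X \<inter> ?L1) * al ?D2 (X \<inter> ?L2) + 0 * ga ?D1 (X \<inter> ?L1) * ga ?D2 (X \<inter> ?L2)"
        by (simp add: algebra_simps)
    qed simp_all
  next
    case False
    define p where "p = cl ((1 - ?a) / (2 - ?a - ?b))"
    have p: "0 \<le> p" "p \<le> 1" unfolding p_def by (rule cl_range)+
    show ?thesis
    proof (rule combine[where ca=0 and cb=p and cc="1-p" and cd=0 and da=0 and db=0 and dc=0 and dd=1
          and LA="?L1" and LB="?L2" and fL="al ?D1" and gL="ga ?D1" and fR="al ?D2" and gR="ga ?D2"])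
      show "NC (al ?D1) (ga ?D1)" "RR (al ?D1) (ga ?D1)" "NC (al ?D2) (ga ?D2)" "RR (al ?D2) (ga ?D2)"
        using IH1 IH2 by auto
      show "0 \<le> al ?D1 X \<and> 0 \<le> ga ?D1 X" "0 \<le> al ?D2 X \<and> 0 \<le> ga ?D2 X" for X
        using IH1 IH2 by auto
      show "?L1 \<inter> ?L2 = {}" by (rule disj)
      show "\<not> X \<subseteq> ?L1 \<union> ?L2 \<Longrightarrow> al ?D X = 0 \<and> ga ?D X = 0" for X by (rule Z)
      show "(0::real) \<le> 1" "(0::real) \<le> 0" "0 \<le> 1 - p" "0 \<le> p" using p by auto
      show "(la * 0 + sg * 0) * (la * 0 + sg * 1) \<le> (la * p + sg * 0) * (la * (1 - p) + sg * 0)"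
        if "0 \<le> la" "0 \<le> sg" for la sg :: real
        using p that by (simp add: mult_nonneg_nonneg)
      show "((1 - p) * u + 0 * v) * (0 * u + 0 * v) \<le> (0 * u + p * v) * (0 * u + 1 * v)"
        if "0 \<le> u" "0 \<le> v" for u v :: real
        using p that by (simp add: mult_nonneg_nonneg)
      show "(p * x + 0 * y) * (0 * x + 0 * y) \<le> (0 * x + (1 - p) * y) * (0 * x + 1 * y)"
        if "0 \<le> x" "0 \<le> y" for x y :: real
        using p that by (simp add: mult_nonneg_nonneg)
      fix X assume X: "X \<subseteq> ?L1 \<union> ?L2"
      have e1: "{z. X \<subseteq> insert (fst (snd (snd z))) (fst (fst z) \<union> fst (snd z))} = {z. X \<subseteq> insert (fst (snd (snd z))) (fst (fst z) \<union> fst (snd z))}" ..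
      have "al ?D X = p * (al ?D1 (X \<inter> ?L1) * ga ?D2 (X \<inter> ?L2)) + (1 - p) * (ga ?D1 (X \<inter> ?L1) * al ?D2 (X \<inter> ?L2))"
        unfolding al_def[of ?D] node_prob_gt[OF False] p_def[symmetric] using AG[OF X] GA[OF X] by simp
      moreover have "ga ?D X = p * (ga ?D1 (X \<inter> ?L1) * ga ?D2 (X \<inter> ?L2)) + (1 - p) * (ga ?D1 (X \<inter> ?L1) * ga ?D2 (X \<inter> ?L2))"
        unfolding ga_def[of ?D] node_prob_gt[OF False] p_def[symmetric] using GG[OF X] GG'[OF X] by simp
      ultimately show "al ?D X = 0 * al ?D1 (X \<inter> ?L1) * al ?D2 (X \<inter> ?L2) + p * al ?D1 (X \<inter> ?L1) * ga ?D2 (X \<inter> ?L2) +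
          (1 - p) * ga ?D1 (X \<inter> ?L1) * al ?D2 (X \<inter> ?L2) + 0 * ga ?D1 (X \<inter> ?L1) * ga ?D2 (X \<inter> ?L2) \<and>
        ga ?D X = 0 * al ?D1 (X \<inter> ?L1) * al ?D2 (X \<inter> ?L2) + 0 * al ?D1 (X \<inter> ?L1) * ga ?D2 (X \<inter> ?L2) +
          0 * ga ?D1 (X \<inter> ?L1) * al ?D2 (X \<inter> ?L2) + 1 * ga ?D1 (X \<inter> ?L1) * ga ?D2 (X \<inter> ?L2)"
        by (simp add: algebra_simps)
    qed simp_all
  qed
qed




lemma fin_alg:
  fixes a b c d :: real
  assumes "0 < b" "a * b \<le> c * d"
  shows "a / b \<le> c / b * (d / b)"
proof -
  have "a / b = (a * b) / (b * b)" using assms(1) by simp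
  also have "\<dots> \<le> (c * d) / (b * b)" using assms by (intro divide_right_mono) auto
  also have "\<dots> = c / b * (d / b)" by simp
  finally show ?thesis .
qed

lemma ps_prob:
  "measure_pmf.prob (pivotal_sampling q t) {T. X \<subseteq> T}
   = (if val q t = 1 then ga (pivot q t) X else al (pivot q t) X)"
proof -
  let ?D = "pivot q t"
  define fin :: "nat set \<times> nat \<times> real \<Rightarrow> nat set" where "fin = (\<lambda>(S, i, a). if a = 1 then insert i S else S)"
  define A where "A = fin -` {T. X \<subseteq> T}"
  define E :: "(nat set \<times> nat \<times> real) set" where "E = (if val q t = 1 then {x. X \<subseteq> insert (fst (snd x)) (fst x)} else {x. X \<subseteq> fst x})"
  have eq: "A \<inter> set_pmf ?D = E \<inter> set_pmf ?D"
  proof (rule set_eqI)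
    fix x :: "nat set \<times> nat \<times> real"
    show "x \<in> A \<inter> set_pmf ?D \<longleftrightarrow> x \<in> E \<inter> set_pmf ?D"
    proof (cases "x \<in> set_pmf ?D")
      case True
      obtain S0 k a where x: "x = (S0, k, a)" by (cases x)
      have "a = val q t" using supp_pivot[OF True] x by simp
      then show ?thesis using True x unfolding A_def E_def fin_def by (cases "val q t = 1") simp_all
    next
      case False then show ?thesis by simp
    qed
  qed
  have "measure_pmf.prob ?D A = measure_pmf.prob ?D (A \<inter> set_pmf ?D)"
    by (rule measure_Int_set_pmf[symmetric])
  also have "\<dots> = measure_pmf.prob ?D (E \<inter> set_pmf ?D)" by (simp only: eq)
  also have "\<dots> = measure_pmf.prob ?D E" by (rule measure_Int_set_pmf)
  finally have m: "measure_pmf.prob ?D A = measure_pmf.prob ?D E" .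
  have "pivotal_sampling q t = map_pmf fin ?D" unfolding pivotal_sampling_def fin_def ..
  then have "measure_pmf.prob (pivotal_sampling q t) {T. X \<subseteq> T} = measure_pmf.prob ?D A"
    unfolding A_def by simp
  also have "\<dots> = measure_pmf.prob ?D E" by (rule m)
  also have "\<dots> = (if val q t = 1 then ga (pivot q t) X else al (pivot q t) X)"
    unfolding E_def al_def ga_def by simp
  finally show ?thesis .
qed

theorem corollaryE3:
  fixes t :: btree and n :: nat and q :: "nat \<Rightarrow> real"
    and S :: "nat set" and i j :: nat
  assumes leaves_t: "distinct (leaves t)" "set (leaves t) = {1..n}"
    and q_range: "\<And>l. l \<in> {1..n} \<Longrightarrow> 0 \<le> q l \<and> q l \<le> 1"
    and q_int: "(\<Sum>l\<in>{1..n}. q l) \<in> \<int>"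
    and S_sub: "S \<subseteq> {1..n}"
    and pos: "measure_pmf.prob (pivotal_sampling q t) {T. S \<subseteq> T} > 0"
    and ij: "i \<in> {1..n} - S" "j \<in> {1..n} - S" "i \<noteq> j"
  shows "(measure_pmf.prob (pivotal_sampling q t) {T. S \<subseteq> T \<and> i \<in> T}
            / measure_pmf.prob (pivotal_sampling q t) {T. S \<subseteq> T})
       * (measure_pmf.prob (pivotal_sampling q t) {T. S \<subseteq> T \<and> j \<in> T}
            / measure_pmf.prob (pivotal_sampling q t) {T. S \<subseteq> T})
       \<ge> measure_pmf.prob (pivotal_sampling q t) {T. S \<subseteq> T \<and> i \<in> T \<and> j \<in> T}
            / measure_pmf.prob (pivotal_sampling q t) {T. S \<subseteq> T}"
proof -
  define f where "f X = measure_pmf.prob (pivotal_sampling q t) {T. X \<subseteq> T}" for X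
  have e1: "{T. S \<subseteq> T \<and> i \<in> T} = {T. insert i S \<subseteq> T}" by auto
  have e2: "{T. S \<subseteq> T \<and> j \<in> T} = {T. insert j S \<subseteq> T}" by auto
  have e3: "{T. S \<subseteq> T \<and> i \<in> T \<and> j \<in> T} = {T. insert i (insert j S) \<subseteq> T}" by auto
  have inv: "NC (al (pivot q t)) (ga (pivot q t))" using main_inv[OF leaves_t(1)] by blast
  have key: "f (insert i (insert j S)) * f S \<le> f (insert i S) * f (insert j S)"
  proof (cases "val q t = 1")
    case True
    have eq: "f X = ga (pivot q t) X" for X unfolding f_def ps_prob using True by simp
    have h: "(0 * al (pivot q t) (insert i (insert j S)) + 1 * ga (pivot q t) (insert i (insert j S))) *
        (0 * al (pivot q t) S + 1 * ga (pivot q t) S) \<le>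
        (0 * al (pivot q t) (insert i S) + 1 * ga (pivot q t) (insert i S)) *
        (0 * al (pivot q t) (insert j S) + 1 * ga (pivot q t) (insert j S))"
      by (rule inv[unfolded NC_def, rule_format, OF ij(3)]) simp_all
    show ?thesis unfolding eq using h by (simp only: mult_zero_left mult_1_left add_0_left)
  next
    case False
    have eq: "f X = al (pivot q t) X" for X unfolding f_def ps_prob using False by simp
    have h: "(1 * al (pivot q t) (insert i (insert j S)) + 0 * ga (pivot q t) (insert i (insert j S))) *
        (1 * al (pivot q t) S + 0 * ga (pivot q t) S) \<le>
        (1 * al (pivot q t) (insert i S) + 0 * ga (pivot q t) (insert i S)) *
        (1 * al (pivot q t) (insert j S) + 0 * ga (pivot q t) (insert j S))"
      by (rule inv[unfolded NC_def, rule_format, OF ij(3)]) simp_all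
    show ?thesis unfolding eq using h by (simp only: mult_zero_left mult_1_left add_0_right)
  qed
  have p0: "0 < f S" using pos unfolding f_def .
  have fin: "f (insert i (insert j S)) / f S \<le> (f (insert i S) / f S) * (f (insert j S) / f S)"
    by (rule fin_alg[OF p0 key])
  show ?thesis using fin unfolding e1 e2 e3 f_def .
qed

end
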